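(* Let $G$ be a finite group and $p$ a prime such that the Sylow $p$-subgroups of $G$ are not normal. Then the set $G_p$ of $p$-elements of $G$ cannot be covered by (is not contained in the union of) $p$ Sylow $p$-subgroups of $G$. In particular, if $\nu_p(G)=p+1$, then $G$ does not have a redundant Sylow $p$-subgroup.
   Context: $\mathrm{Syl}_p(G)$ denotes the set of Sylow $p$-subgroups of $G$ and $\nu_p(G)=|\mathrm{Syl}_p(G)|$. $G$ is said to have a redundant Sylow $p$-subgroup if $G_p$ is contained in the union of the members of some proper subset of $\mathrm{Syl}_p(G)$. *)

theory Defs
  imports "HOL-Algebra.Algebra"
begin

definition Syl :: "('a, 'b) monoid_scheme \<Rightarrow> nat \<Rightarrow> 'a set set" where
  "Syl G p = {P. subgroup P G \<and> card P = p ^ multiplicity p (order G)}"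

definition nu :: "('a, 'b) monoid_scheme \<Rightarrow> nat \<Rightarrow> nat" where
  "nu G p = card (Syl G p)"

definition p_elements :: "('a, 'b) monoid_scheme \<Rightarrow> nat \<Rightarrow> 'a set" where
  "p_elements G p = {x \<in> carrier G. \<exists>n::nat. x [^]\<^bsub>G\<^esub> (p ^ n) = \<one>\<^bsub>G\<^esub>}"

definition has_redundant_sylow :: "('a, 'b) monoid_scheme \<Rightarrow> nat \<Rightarrow> bool" where
  "has_redundant_sylow G p = (\<exists>S. S \<subset> Syl G p \<and> p_elements G p \<subseteq> \<Union>S)"

end

theory Submission
  imports Defs
begin

context group
begin

lemma conj_eq:
  assumes "x \<in> carrier G" "H \<subseteq> carrier G"
  shows "x <# H #> inv x = (\<lambda>h. x \<otimes> h \<otimes> inv x) ` H"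
  using assms unfolding l_coset_def r_coset_def by auto

lemma card_conj:
  assumes "x \<in> carrier G" "H \<subseteq> carrier G"
  shows "card (x <# H #> inv x) = card H"
proof -
  have "inj_on (\<lambda>h. x \<otimes> h \<otimes> inv x) H"
    using assms by (auto simp: inj_on_def subset_iff)
  then show ?thesis using conj_eq[OF assms] by (simp add: card_image)
qed

lemma conj_subgroup:
  assumes "x \<in> carrier G" "subgroup H G"
  shows "subgroup (x <# H #> inv x) G"
proof -
  interpret A: group_action G "{H. subgroup H G}" "(\<lambda>g. \<lambda>H \<in> {H. subgroup H G}. g <# H #> (inv g))"
    by (rule action_by_conjugation_on_subgroups_set)
  show ?thesis using A.element_image[OF assms(1), of H] assms by auto
qed

lemma sylow_conj:
  assumes "P \<in> Syl G p" "x \<in> carrier G"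
  shows "x <# P #> inv x \<in> Syl G p"
proof -
  have PG: "subgroup P G" and cP: "card P = p ^ multiplicity p (order G)"
    using assms unfolding Syl_def by auto
  show ?thesis using card_conj[OF assms(2) subgroup.subset[OF PG]] conj_subgroup[OF assms(2) PG] cP
    unfolding Syl_def by auto
qed

lemma syl_finite:
  assumes "finite (carrier G)"
  shows "finite (Syl G p)"
proof -
  have "Syl G p \<subseteq> Pow (carrier G)" unfolding Syl_def using subgroup.subset by auto
  then show ?thesis using assms finite_subset by blast
qed

lemma syl_pow:
  assumes "P \<in> Syl G p" "x \<in> P" "finite (carrier G)"
  shows "x [^] (p ^ multiplicity p (order G)) = \<one>"
proof -
  have PG: "subgroup P G" and cP: "card P = p ^ multiplicity p (order G)"
    using assms unfolding Syl_def by auto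
  interpret GP: group "G\<lparr>carrier := P\<rparr>" using subgroup_imp_group[OF PG] .
  have "x [^]\<^bsub>G\<lparr>carrier := P\<rparr>\<^esub> order (G\<lparr>carrier := P\<rparr>) = \<one>\<^bsub>G\<lparr>carrier := P\<rparr>\<^esub>"
    using GP.pow_order_eq_1 assms(2) by simp
  then show ?thesis using cP nat_pow_consistent[of x _ P] by (simp add: order_def)
qed

lemma syl_pelem:
  assumes "P \<in> Syl G p" "finite (carrier G)"
  shows "P \<subseteq> p_elements G p"
  using syl_pow[OF assms(1) _ assms(2)] assms subgroup.subset unfolding Syl_def p_elements_def by blast

lemma cover_lemma:
  assumes fin: "finite (carrier G)" and pr: "Factorial_Ring.prime p" and Q: "Q \<in> Syl G p"
    and S: "S \<subseteq> Syl G p" and cS: "card S \<le> p" and QS: "Q \<notin> S" and cov: "Q \<subseteq> \<Union>S"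
  shows False
proof -
  define a where "a = multiplicity p (order G)"
  have QG: "subgroup Q G" and cQ: "card Q = p ^ a" using Q unfolding Syl_def a_def by auto
  have finS: "finite S" using syl_finite[OF fin] S finite_subset by blast
  have finQ: "finite Q" using fin QG subgroup.subset finite_subset by blast
  have p2: "p \<ge> 2" using pr prime_ge_2_nat by blast
  have one: "\<one> \<in> Q" using QG subgroup.one_closed by blast
  then have Sne: "S \<noteq> {}" using cov by auto
  have small: "card (Q \<inter> R) \<le> p ^ (a - 1) \<and> a \<ge> 1" if R: "R \<in> S" for R
  proof -
    have RG: "subgroup R G" and cR: "card R = p ^ a" using R S unfolding Syl_def a_def by auto
    have sub: "subgroup (Q \<inter> R) (G\<lparr>carrier := Q\<rparr>)"
      using subgroup_incl[OF subgroups_Inter_pair[OF QG RG] QG] by auto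
    interpret GQ: group "G\<lparr>carrier := Q\<rparr>" using subgroup_imp_group[OF QG] .
    have "card (Q \<inter> R) dvd order (G\<lparr>carrier := Q\<rparr>)"
      using GQ.lagrange[OF sub] by (metis dvd_triv_right)
    then have "card (Q \<inter> R) dvd p ^ a" using cQ by (simp add: order_def)
    then obtain m where m: "m \<le> a" "card (Q \<inter> R) = p ^ m" using divides_primepow_nat[OF pr] by blast
    have "m \<noteq> a"
    proof
      assume "m = a"
      then have "card (Q \<inter> R) = card Q" using m cQ by simp
      then have "Q \<inter> R = Q" using finQ by (metis Int_lower1 card_subset_eq)
      then have "Q \<subseteq> R" by blast
      moreover have "finite R" using fin RG subgroup.subset finite_subset by blast
      ultimately have "Q = R" using cQ cR by (metis card_subset_eq)
      then show False using QS R by simp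
    qed
    then have "m \<le> a - 1" "a \<ge> 1" using m by auto
    moreover have "p ^ m \<le> p ^ (a - 1)" using power_increasing[OF \<open>m \<le> a - 1\<close>, of p] p2 by simp
    ultimately show ?thesis using m by simp
  qed
  obtain R0 where "R0 \<in> S" using Sne by blast
  then have a1: "a \<ge> 1" using small by blast
  have "Q - {\<one>} = (\<Union>R\<in>S. (Q \<inter> R) - {\<one>})" using cov by blast
  then have "card (Q - {\<one>}) \<le> (\<Sum>R\<in>S. card ((Q \<inter> R) - {\<one>}))"
    using card_UN_le[OF finS] by metis
  also have "\<dots> \<le> (\<Sum>R\<in>S. p ^ (a - 1) - 1)"
  proof (rule sum_mono)
    fix R assume "R \<in> S"
    then have "card (Q \<inter> R) \<le> p ^ (a - 1)" using small by blast
    moreover have "finite (Q \<inter> R)" using finQ by blast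
    moreover have "\<one> \<in> R" using \<open>R \<in> S\<close> S subgroup.one_closed unfolding Syl_def by blast
    ultimately show "card (Q \<inter> R - {\<one>}) \<le> p ^ (a - 1) - 1"
      using one by (simp add: card_Diff_singleton_if)
  qed
  also have "\<dots> = card S * (p ^ (a - 1) - 1)" by simp
  also have "\<dots> \<le> p * (p ^ (a - 1) - 1)" using cS by simp
  also have "\<dots> = p ^ a - p"
  proof -
    obtain b where "a = Suc b" using a1 by (cases a) auto
    then show ?thesis by (simp add: right_diff_distrib')
  qed
  finally have "p ^ a - 1 \<le> p ^ a - p" using cQ one finQ by (simp add: card_Diff_singleton_if)
  moreover have "p ^ a \<ge> p" using power_increasing[OF a1, of p] p2 by simp
  ultimately show False using p2 by linarith
qed

lemma normalizes_sylow:
  assumes fin: "finite (carrier G)" and pr: "Factorial_Ring.prime p"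
    and P: "P \<in> Syl G p" and Q: "Q \<in> Syl G p"
    and nrm: "\<forall>x\<in>P. x <# Q #> inv x = Q"
  shows "P \<subseteq> Q"
proof
  fix x assume xP: "x \<in> P"
  define a where "a = multiplicity p (order G)"
  have PG: "subgroup P G" using P unfolding Syl_def by auto
  have QG: "subgroup Q G" and cQ: "card Q = p ^ a" using Q unfolding Syl_def a_def by auto
  have xG: "x \<in> carrier G" using xP PG subgroup.subset by blast
  define N where "N = normalizer G Q"
  have NG: "subgroup N G" unfolding N_def using normalizer_imp_subgroup subgroup.subset[OF QG] by blast
  have xN: "x \<in> N" using xG nrm xP subgroup.subset[OF QG]
    unfolding N_def normalizer_def stabilizer_def by auto
  have nQ: "normal Q (G\<lparr>carrier := N\<rparr>)" unfolding N_def by (rule subgroup_in_normalizer[OF QG])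
  interpret GN: group "G\<lparr>carrier := N\<rparr>" using subgroup_imp_group[OF NG] .
  interpret nQ: normal Q "G\<lparr>carrier := N\<rparr>" by (rule nQ)
  have F: "group (G\<lparr>carrier := N\<rparr> Mod Q)" by (rule nQ.factorgroup_is_group)
  interpret F: group "G\<lparr>carrier := N\<rparr> Mod Q" by (rule F)
  have hom: "(\<lambda>a. Q #>\<^bsub>G\<lparr>carrier := N\<rparr>\<^esub> a) \<in> hom (G\<lparr>carrier := N\<rparr>) (G\<lparr>carrier := N\<rparr> Mod Q)"
    by (rule nQ.r_coset_hom_Mod)
  define y where "y = Q #>\<^bsub>G\<lparr>carrier := N\<rparr>\<^esub> x"
  have yc: "y \<in> carrier (G\<lparr>carrier := N\<rparr> Mod Q)" unfolding y_def using hom xN unfolding hom_def by auto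
  have xpow: "x [^] (p ^ a) = \<one>" using syl_pow[OF P xP fin] a_def by simp
  have "y [^]\<^bsub>G\<lparr>carrier := N\<rparr> Mod Q\<^esub> (p ^ a) = Q #>\<^bsub>G\<lparr>carrier := N\<rparr>\<^esub> (x [^]\<^bsub>G\<lparr>carrier := N\<rparr>\<^esub> (p ^ a))"
    unfolding y_def using hom_nat_pow[OF hom, of x "p ^ a"] xN F GN.is_group by simp
  also have "\<dots> = Q #>\<^bsub>G\<lparr>carrier := N\<rparr>\<^esub> \<one>\<^bsub>G\<lparr>carrier := N\<rparr>\<^esub>"
    using xpow nat_pow_consistent[of x "p ^ a" N] by simp
  also have "\<dots> = Q" using GN.coset_mult_one nQ.subset by blast
  also have "\<dots> = \<one>\<^bsub>G\<lparr>carrier := N\<rparr> Mod Q\<^esub>" by (simp add: FactGroup_def)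
  finally have ypow: "y [^]\<^bsub>G\<lparr>carrier := N\<rparr> Mod Q\<^esub> (p ^ a) = \<one>\<^bsub>G\<lparr>carrier := N\<rparr> Mod Q\<^esub>" .
  have d1: "F.ord y dvd p ^ a" using F.pow_eq_id[OF yc] ypow by simp
  have d2: "F.ord y dvd order (G\<lparr>carrier := N\<rparr> Mod Q)" by (rule F.ord_dvd_group_order[OF yc])
  have lagN: "card (RCOSETS (G\<lparr>carrier := N\<rparr>) Q) * card Q = card N"
    using GN.lagrange[OF nQ.subgroup_axioms] by (simp add: order_def)
  have lagG: "card (rcosets N) * card N = order G" using lagrange[OF NG] .
  have ordF: "order (G\<lparr>carrier := N\<rparr> Mod Q) = card (RCOSETS (G\<lparr>carrier := N\<rparr>) Q)"
    by (simp add: order_def FactGroup_def)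
  have G0: "order G \<noteq> 0" using fin by (simp add: order_gt_0_iff_finite[symmetric])
  have np: "\<not> p dvd card (RCOSETS (G\<lparr>carrier := N\<rparr>) Q)"
  proof
    assume "p dvd card (RCOSETS (G\<lparr>carrier := N\<rparr>) Q)"
    then have "p ^ Suc a dvd order G" using lagN lagG cQ
      by (metis mult.commute mult_dvd_mono power_Suc dvd_mult2 dvd_refl)
    then have "Suc a \<le> multiplicity p (order G)"
      using power_dvd_iff_le_multiplicity G0 pr by (metis not_prime_unit)
    then show False using a_def by simp
  qed
  have cop: "coprime (p ^ a) (card (RCOSETS (G\<lparr>carrier := N\<rparr>) Q))"
    using np pr by (simp add: coprime_commute prime_imp_coprime)
  then have "F.ord y = 1" using coprime_common_divisor[OF cop d1] d2 ordF by simp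
  then have "y = Q" using F.ord_eq_1[OF yc] by (simp add: FactGroup_def)
  then have "\<one> \<otimes> x \<in> Q" using QG subgroup.one_closed unfolding y_def r_coset_def by force
  then show "x \<in> Q" using xG by simp
qed

lemma many_sylows:
  assumes fin: "finite (carrier G)" and pr: "Factorial_Ring.prime p"
    and nn: "\<forall>P \<in> Syl G p. \<not> P \<lhd> G"
  shows "p + 1 \<le> card (Syl G p)"
proof (rule ccontr)
  assume "\<not> p + 1 \<le> card (Syl G p)"
  then have cS: "card (Syl G p) \<le> p" by simp
  define a where "a = multiplicity p (order G)"
  have G0: "order G \<noteq> 0" using fin by (simp add: order_gt_0_iff_finite[symmetric])
  have "p ^ a dvd order G" unfolding a_def by (rule multiplicity_dvd)
  then have "order G = p ^ a * (order G div p ^ a)" by simp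
  then obtain P where PG: "subgroup P G" and cP: "card P = p ^ a"
    using sylow_thm[OF pr is_group _ fin] by blast
  have P: "P \<in> Syl G p" using PG cP unfolding Syl_def a_def by simp
  have "\<not> P \<lhd> G" using nn P by blast
  then obtain x h where xG: "x \<in> carrier G" and hP: "h \<in> P" and nh: "x \<otimes> h \<otimes> inv x \<notin> P"
    using normal_inv_iff PG by blast
  define Q where "Q = x <# P #> inv x"
  have Q: "Q \<in> Syl G p" unfolding Q_def by (rule sylow_conj[OF P xG])
  have "x \<otimes> h \<otimes> inv x \<in> Q" unfolding Q_def using conj_eq[OF xG subgroup.subset[OF PG]] hP by blast
  then have QP: "Q \<noteq> P" using nh by blast
  have QG: "subgroup Q G" using Q unfolding Syl_def by auto
  let ?phi = "\<lambda>g. \<lambda>H \<in> {H. subgroup H G}. g <# H #> (inv g)"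
  interpret A: group_action "G\<lparr>carrier := P\<rparr>" "{H. subgroup H G}" ?phi
    by (rule group_action.induced_action[OF action_by_conjugation_on_subgroups_set PG])
  have os: "card (orbit (G\<lparr>carrier := P\<rparr>) ?phi Q) * card (stabilizer (G\<lparr>carrier := P\<rparr>) ?phi Q) = p ^ a"
    using A.orbit_stabilizer_theorem[of Q] QG cP by (simp add: order_def)
  have "card (orbit (G\<lparr>carrier := P\<rparr>) ?phi Q) dvd p ^ a" unfolding os[symmetric] by (rule dvd_triv_left)
  then obtain k where k: "card (orbit (G\<lparr>carrier := P\<rparr>) ?phi Q) = p ^ k"
    using divides_primepow_nat[OF pr] by blast
  have sub: "orbit (G\<lparr>carrier := P\<rparr>) ?phi Q \<subseteq> Syl G p - {P}"
  proof
    fix R assume "R \<in> orbit (G\<lparr>carrier := P\<rparr>) ?phi Q"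
    then obtain g where gP: "g \<in> P" and R: "R = g <# Q #> inv g"
      unfolding orbit_def using QG by auto
    have gG: "g \<in> carrier G" using gP PG subgroup.subset by blast
    have "R \<in> Syl G p" using R sylow_conj[OF Q gG] by simp
    moreover have "R \<noteq> P"
    proof
      assume RP: "R = P"
      have "g <# P = P" using coset_join3[OF gG PG gP] .
      then have "g <# P #> inv g = P" using coset_join2[OF inv_closed[OF gG] PG subgroup.m_inv_closed[OF PG gP]] by simp
      then have "?phi g P = ?phi g Q" using RP R PG QG by simp
      then have "P = Q" using A.inj_prop[of g] gP PG QG unfolding inj_on_def by auto
      then show False using QP by simp
    qed
    ultimately show "R \<in> Syl G p - {P}" by simp
  qed
  have cd: "card (Syl G p - {P}) = card (Syl G p) - 1" using P syl_finite[OF fin] by (simp add: card_Diff_singleton)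
  have "card (Syl G p) > 0" using P syl_finite[OF fin] card_gt_0_iff by blast
  then have lt: "card (Syl G p - {P}) < p" using cd cS prime_gt_0_nat[OF pr] by linarith
  have "card (orbit (G\<lparr>carrier := P\<rparr>) ?phi Q) \<le> card (Syl G p - {P})"
    using card_mono[OF _ sub] syl_finite[OF fin] by blast
  then have pk: "p ^ k < p" using k lt by linarith
  have "k = 0"
  proof (rule ccontr)
    assume "k \<noteq> 0"
    then have "p ^ 1 \<le> p ^ k" using power_increasing[of 1 k p] prime_gt_0_nat[OF pr] by simp
    then show False using pk by simp
  qed
  then have c1: "card (orbit (G\<lparr>carrier := P\<rparr>) ?phi Q) = 1" using k by simp
  have "Q \<in> orbit (G\<lparr>carrier := P\<rparr>) ?phi Q"
  proof -
    have "?phi \<one> Q = Q" using QG lcos_mult_one[OF subgroup.subset[OF QG]] coset_mult_one[OF subgroup.subset[OF QG]] by simp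
    then show ?thesis unfolding orbit_def using PG subgroup.one_closed by force
  qed
  moreover obtain z where "orbit (G\<lparr>carrier := P\<rparr>) ?phi Q = {z}" using card_1_singletonE[OF c1] by blast
  ultimately have orb: "orbit (G\<lparr>carrier := P\<rparr>) ?phi Q = {Q}" by simp
  have "\<forall>g\<in>P. g <# Q #> inv g = Q"
  proof
    fix g assume "g \<in> P"
    then have "?phi g Q \<in> {?phi h Q | h. h \<in> carrier (G\<lparr>carrier := P\<rparr>)}" by auto
    then have "?phi g Q \<in> orbit (G\<lparr>carrier := P\<rparr>) ?phi Q" unfolding orbit_def .
    then show "g <# Q #> inv g = Q" using orb QG by simp
  qed
  then have PQ: "P \<subseteq> Q" using normalizes_sylow[OF fin pr P Q] by blast
  have cPQ: "card P = card Q" using Q P unfolding Syl_def by simp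
  have fQ: "finite Q" using finite_subset[OF subgroup.subset[OF QG] fin] .
  have "P = Q" using card_subset_eq[OF fQ PQ cPQ] .
  then show False using QP by simp
qed

end


theorem theorem8p2:
  fixes G :: "('a, 'b) monoid_scheme" and p :: nat
  assumes "group G" and "finite (carrier G)" and "Factorial_Ring.prime p"
    and "\<forall>P \<in> Syl G p. \<not> P \<lhd> G"
  shows "(\<nexists>S. S \<subseteq> Syl G p \<and> card S \<le> p \<and> p_elements G p \<subseteq> \<Union>S)
         \<and> (nu G p = p + 1 \<longrightarrow> \<not> has_redundant_sylow G p)"
proof -
  interpret group G by (rule assms(1))
  have finSyl: "finite (Syl G p)" using syl_finite[OF assms(2)] .
  have many: "p + 1 \<le> card (Syl G p)" using many_sylows[OF assms(2) assms(3) assms(4)] .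
  have part1: "\<nexists>S. S \<subseteq> Syl G p \<and> card S \<le> p \<and> p_elements G p \<subseteq> \<Union>S"
  proof
    assume "\<exists>S. S \<subseteq> Syl G p \<and> card S \<le> p \<and> p_elements G p \<subseteq> \<Union>S"
    then obtain S where S: "S \<subseteq> Syl G p" and cS: "card S \<le> p" and cov: "p_elements G p \<subseteq> \<Union>S"
      by blast
    have lt: "card S < card (Syl G p)" using cS many by linarith
    have "\<not> Syl G p \<subseteq> S"
    proof
      assume "Syl G p \<subseteq> S"
      then have "card (Syl G p) \<le> card S" using card_mono[OF finite_subset[OF S finSyl]] by blast
      then show False using lt by linarith
    qed
    then obtain Q where Q: "Q \<in> Syl G p" and QS: "Q \<notin> S" by blast
    have "Q \<subseteq> \<Union>S" using syl_pelem[OF Q assms(2)] cov by blast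
    then show False using cover_lemma[OF assms(2) assms(3) Q S cS QS] by blast
  qed
  have part2: "nu G p = p + 1 \<longrightarrow> \<not> has_redundant_sylow G p"
  proof
    assume nu: "nu G p = p + 1"
    show "\<not> has_redundant_sylow G p"
    proof
      assume "has_redundant_sylow G p"
      then obtain S where S: "S \<subset> Syl G p" and cov: "p_elements G p \<subseteq> \<Union>S"
        unfolding has_redundant_sylow_def by blast
      have "card S < card (Syl G p)" using psubset_card_mono[OF finSyl S] .
      then have "card S \<le> p" using nu unfolding nu_def by simp
      then show False using part1 S cov by blast
    qed
  qed
  show ?thesis using part1 part2 by blast
qed

end
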